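(* In the setting of the context, the inclusion maps $\Gamma(F_{xz},R_{xz})\hookrightarrow\Gamma(G_1,S_1)$ and $\Gamma(F_{yz},R_{yz})\hookrightarrow\Gamma(G_1,S_1)$ of Cayley graphs are isometric embeddings. Moreover, for all $g_0\in F_{xz}$, $g_1\in F_{yz}$ and $h\in H$, we have $|g_0h|_{S_1}\ge|g_0|_{S_1}$ and $|g_1h|_{S_1}\ge|g_1|_{S_1}$.
   Context: $H$ is a finitely presented group with finite generating set $T$, containing a free subgroup $F$ of rank $p$ with free basis $R=\{d_1,\dots,d_p\}\subset T$ (standing assumption: $\mathrm{Dist}_F^H$ admits an exponentially bounded sequence of palindromic certificates in $F$). $F_x,F_y,F_z$ are free of rank $p$ with bases $R_x=\{x_i\}$, $R_y=\{y_i\}$, $R_z=\{z_i\}$. $G_1=[H\ast_{\langle d_i=x_iy_i^{-1}\rangle}(F_x\times F_y\times F_z)]\times\langle s_1\rangle$, the amalgamation identifying $d_i$ with $x_iy_i^{-1}$. Set $a_i=x_iz_i$, $b_i=y_iz_i$, $R_{xz}=\{a_i\}$, $R_{yz}=\{b_i\}$, $F_{xz}=\langle R_{xz}\rangle$, $F_{yz}=\langle R_{yz}\rangle$ (free of rank $p$), and $S_1=T\cup R_x\cup R_y\cup R_z\cup R_{xz}\cup R_{yz}\cup\{s_1\}$. $|g|_S$ denotes word length with respect to $S$. *)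

theory Defs
  imports "HOL-Algebra.Algebra"
begin

text \<open>A word over a generating set X is a list of pairs (x, b); b = True stands for x,
  b = False for its inverse. Free reduction is done by a stack-based cancellation.\<close>

definition free_step :: "'a \<times> bool \<Rightarrow> ('a \<times> bool) list \<Rightarrow> ('a \<times> bool) list" where
  "free_step x acc = (case acc of [] \<Rightarrow> [x]
     | y # ys \<Rightarrow> (if fst y = fst x \<and> snd y \<noteq> snd x then ys else x # acc))"

definition free_reduce :: "('a \<times> bool) list \<Rightarrow> ('a \<times> bool) list" where
  "free_reduce ws = foldr free_step ws []"

definition free_group :: "'a set \<Rightarrow> ('a \<times> bool) list monoid" where
  "free_group Xs = \<lparr>carrier = {w. fst ` set w \<subseteq> Xs \<and> free_reduce w = w},
                   monoid.mult = (\<lambda>u v. free_reduce (u @ v)), one = []\<rparr>"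

definition free_gen :: "'a \<Rightarrow> ('a \<times> bool) list" where
  "free_gen x = [(x, True)]"

definition free_eval :: "('g, 'c) monoid_scheme \<Rightarrow> ('a \<Rightarrow> 'g) \<Rightarrow> ('a \<times> bool) list \<Rightarrow> 'g" where
  "free_eval G f w = foldr (\<lambda>(x, b) acc. (if b then f x else inv\<^bsub>G\<^esub> (f x)) \<otimes>\<^bsub>G\<^esub> acc) w \<one>\<^bsub>G\<^esub>"

definition normal_closure :: "('g, 'c) monoid_scheme \<Rightarrow> 'g set \<Rightarrow> 'g set" where
  "normal_closure G R = generate G (\<Union>g\<in>carrier G. (\<lambda>r. g \<otimes>\<^bsub>G\<^esub> r \<otimes>\<^bsub>G\<^esub> inv\<^bsub>G\<^esub> g) ` R)"

definition finitely_presented_by :: "('g, 'c) monoid_scheme \<Rightarrow> 'g set \<Rightarrow> bool" where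
  "finitely_presented_by H T \<longleftrightarrow> group H \<and> finite T \<and> T \<subseteq> carrier H \<and>
     generate H T = carrier H \<and>
     (\<exists>Rel. finite Rel \<and> Rel \<subseteq> carrier (free_group T) \<and>
        {w \<in> carrier (free_group T). free_eval H id w = \<one>\<^bsub>H\<^esub>}
          = normal_closure (free_group T) Rel)"

definition free_basis :: "('g, 'c) monoid_scheme \<Rightarrow> ('i \<Rightarrow> 'g) \<Rightarrow> 'i set \<Rightarrow> bool" where
  "free_basis H f I \<longleftrightarrow> f ` I \<subseteq> carrier H \<and> inj_on (free_eval H f) (carrier (free_group I))"

text \<open>Amalgamated free product of A and B, identifying phi i with psi i for i in I
  (and hence the subgroups they generate), given by the standard presentation:
  generators = elements of A and B, relators = multiplication tables of A and B and the
  identifications.\<close>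

definition amalg_rels ::
  "('a, 'c) monoid_scheme \<Rightarrow> ('b, 'd) monoid_scheme \<Rightarrow> ('i \<Rightarrow> 'a) \<Rightarrow> ('i \<Rightarrow> 'b) \<Rightarrow> 'i set
     \<Rightarrow> (('a + 'b) \<times> bool) list set" where
  "amalg_rels A B phi psi I =
     {free_reduce [(Inl a, True), (Inl a', True), (Inl (a \<otimes>\<^bsub>A\<^esub> a'), False)] | a a'.
        a \<in> carrier A \<and> a' \<in> carrier A}
   \<union> {free_reduce [(Inr b, True), (Inr b', True), (Inr (b \<otimes>\<^bsub>B\<^esub> b'), False)] | b b'.
        b \<in> carrier B \<and> b' \<in> carrier B}
   \<union> {free_reduce [(Inl (phi i), True), (Inr (psi i), False)] | i. i \<in> I}"

definition amalg_free ::
  "('a, 'c) monoid_scheme \<Rightarrow> ('b, 'd) monoid_scheme \<Rightarrow> (('a + 'b) \<times> bool) list monoid" where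
  "amalg_free A B = free_group (carrier A <+> carrier B)"

definition amalg_N ::
  "('a, 'c) monoid_scheme \<Rightarrow> ('b, 'd) monoid_scheme \<Rightarrow> ('i \<Rightarrow> 'a) \<Rightarrow> ('i \<Rightarrow> 'b) \<Rightarrow> 'i set
     \<Rightarrow> (('a + 'b) \<times> bool) list set" where
  "amalg_N A B phi psi I = normal_closure (amalg_free A B) (amalg_rels A B phi psi I)"

definition amalgam ::
  "('a, 'c) monoid_scheme \<Rightarrow> ('b, 'd) monoid_scheme \<Rightarrow> ('i \<Rightarrow> 'a) \<Rightarrow> ('i \<Rightarrow> 'b) \<Rightarrow> 'i set
     \<Rightarrow> (('a + 'b) \<times> bool) list set monoid" where
  "amalgam A B phi psi I = amalg_free A B Mod amalg_N A B phi psi I"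

definition amalg_inl where
  "amalg_inl A B phi psi I a = amalg_N A B phi psi I #>\<^bsub>amalg_free A B\<^esub> free_gen (Inl a)"

definition amalg_inr where
  "amalg_inr A B phi psi I b = amalg_N A B phi psi I #>\<^bsub>amalg_free A B\<^esub> free_gen (Inr b)"

type_synonym fw = "(nat \<times> bool) list"

definition Pxyz :: "nat \<Rightarrow> (fw \<times> fw \<times> fw) monoid" where
  "Pxyz p = free_group {..<p} \<times>\<times> free_group {..<p} \<times>\<times> free_group {..<p}"

definition xP :: "nat \<Rightarrow> fw \<times> fw \<times> fw" where "xP i = (free_gen i, [], [])"
definition yP :: "nat \<Rightarrow> fw \<times> fw \<times> fw" where "yP i = ([], free_gen i, [])"
definition zP :: "nat \<Rightarrow> fw \<times> fw \<times> fw" where "zP i = ([], [], free_gen i)"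

definition Amal1 where
  "Amal1 H p d = amalgam H (Pxyz p) d (\<lambda>i. xP i \<otimes>\<^bsub>Pxyz p\<^esub> inv\<^bsub>Pxyz p\<^esub> yP i) {..<p}"

definition G1 where
  "G1 H p d = Amal1 H p d \<times>\<times> integer_group"

definition embH where
  "embH H p d h = (amalg_inl H (Pxyz p) d (\<lambda>i. xP i \<otimes>\<^bsub>Pxyz p\<^esub> inv\<^bsub>Pxyz p\<^esub> yP i) {..<p} h, 0::int)"

definition embP where
  "embP H p d q = (amalg_inr H (Pxyz p) d (\<lambda>i. xP i \<otimes>\<^bsub>Pxyz p\<^esub> inv\<^bsub>Pxyz p\<^esub> yP i) {..<p} q, 0::int)"

definition gx where "gx H p d i = embP H p d (xP i)"
definition gy where "gy H p d i = embP H p d (yP i)"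
definition gz where "gz H p d i = embP H p d (zP i)"
definition gs1 where "gs1 H p d = (\<one>\<^bsub>Amal1 H p d\<^esub>, 1::int)"

definition ga where "ga H p d i = gx H p d i \<otimes>\<^bsub>G1 H p d\<^esub> gz H p d i"
definition gb where "gb H p d i = gy H p d i \<otimes>\<^bsub>G1 H p d\<^esub> gz H p d i"

definition Rxz where "Rxz H p d = ga H p d ` {..<p}"
definition Ryz where "Ryz H p d = gb H p d ` {..<p}"
definition Fxz where "Fxz H p d = generate (G1 H p d) (Rxz H p d)"
definition Fyz where "Fyz H p d = generate (G1 H p d) (Ryz H p d)"

definition S1 where
  "S1 H T p d = embH H p d ` T \<union> gx H p d ` {..<p} \<union> gy H p d ` {..<p} \<union> gz H p d ` {..<p}
     \<union> Rxz H p d \<union> Ryz H p d \<union> {gs1 H p d}"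

definition word_length :: "('g, 'c) monoid_scheme \<Rightarrow> 'g set \<Rightarrow> 'g \<Rightarrow> nat" where
  "word_length G S g = (LEAST n. \<exists>ws. length ws = n \<and> set ws \<subseteq> S \<union> m_inv G ` S \<and>
                                   foldr (\<otimes>\<^bsub>G\<^esub>) ws \<one>\<^bsub>G\<^esub> = g)"

definition cayley_dist :: "('g, 'c) monoid_scheme \<Rightarrow> 'g set \<Rightarrow> 'g \<Rightarrow> 'g \<Rightarrow> nat" where
  "cayley_dist G S g h = word_length G S (inv\<^bsub>G\<^esub> g \<otimes>\<^bsub>G\<^esub> h)"

end

theory Submission
  imports Defs
begin

definition cancels :: "'a \<times> bool \<Rightarrow> 'a \<times> bool \<Rightarrow> bool" where
  "cancels x y \<longleftrightarrow> fst x = fst y \<and> snd x \<noteq> snd y"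

fun red :: "('a \<times> bool) list \<Rightarrow> bool" where
  "red [] = True"
| "red [x] = True"
| "red (x # y # ys) = (\<not> cancels x y \<and> red (y # ys))"

definition flip :: "'a \<times> bool \<Rightarrow> 'a \<times> bool" where
  "flip x = (fst x, \<not> snd x)"

lemma red_tl: "red (x # w) \<Longrightarrow> red w"
  by (cases w) auto

lemma free_step_Nil [simp]: "free_step x [] = [x]"
  by (simp add: free_step_def)

lemma free_step_Cons: "free_step x (y # ys) = (if cancels y x then ys else x # y # ys)"
  by (simp add: free_step_def cancels_def)

lemma red_free_step: "red acc \<Longrightarrow> red (free_step x acc)"
  by (cases acc) (auto simp: free_step_Cons cancels_def dest: red_tl)

lemma red_foldr: "red acc \<Longrightarrow> red (foldr free_step u acc)"
  by (induction u) (auto intro: red_free_step)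

lemma red_free_reduce: "red (free_reduce w)"
  unfolding free_reduce_def by (rule red_foldr) simp

lemma free_step_red_id: "red (x # w) \<Longrightarrow> free_step x w = x # w"
  by (cases w) (auto simp: free_step_Cons cancels_def)

lemma free_reduce_red: "red w \<Longrightarrow> free_reduce w = w"
proof (induction w)
  case Nil then show ?case by (simp add: free_reduce_def)
next
  case (Cons x w)
  then have "free_reduce w = w" using red_tl by blast
  then show ?case using Cons.prems free_step_red_id
    by (metis foldr_Cons free_reduce_def o_apply)
qed

lemma free_reduce_eq_iff: "free_reduce w = w \<longleftrightarrow> red w"
  using free_reduce_red red_free_reduce by metis

lemma flip_flip [simp]: "flip (flip x) = x"
  by (simp add: flip_def)

lemma cancels_iff_flip: "cancels y x \<longleftrightarrow> y = flip x"
  by (cases x, cases y) (auto simp: cancels_def flip_def)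

lemma free_step_flip: "red acc \<Longrightarrow> free_step x (free_step (flip x) acc) = acc"
proof (cases acc)
  case Nil then show ?thesis by (simp add: free_step_Cons cancels_iff_flip)
next
  case (Cons y ys)
  assume r: "red acc"
  show ?thesis
  proof (cases "y = x")
    case True
    then have "free_step (flip x) acc = ys" using Cons by (simp add: free_step_Cons cancels_iff_flip)
    moreover have "free_step x ys = x # ys" using r Cons True free_step_red_id by blast
    ultimately show ?thesis using Cons True by simp
  next
    case False
    then have "free_step (flip x) acc = flip x # acc" using Cons
      by (auto simp: free_step_Cons cancels_iff_flip)
    then show ?thesis by (simp add: free_step_Cons cancels_iff_flip)
  qed
qed

lemma foldr_free_step_comm:
  assumes "red acc"
  shows "foldr free_step (free_step x r) acc = free_step x (foldr free_step r acc)"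
proof (cases r)
  case Nil then show ?thesis by simp
next
  case (Cons y ys)
  show ?thesis
  proof (cases "cancels y x")
    case True
    then have "y = flip x" by (simp add: cancels_iff_flip)
    then show ?thesis using Cons True free_step_flip[OF red_foldr[OF assms], of x ys]
      by (simp add: free_step_Cons)
  next
    case False
    then show ?thesis using Cons by (simp add: free_step_Cons)
  qed
qed

lemma foldr_free_reduce:
  assumes "red acc"
  shows "foldr free_step (free_reduce z) acc = foldr free_step z acc"
proof (induction z)
  case Nil then show ?case by (simp add: free_reduce_def)
next
  case (Cons x z)
  have "free_reduce (x # z) = free_step x (free_reduce z)" by (simp add: free_reduce_def)
  then show ?case using foldr_free_step_comm[OF assms] Cons by simp
qed

lemma free_reduce_append: "free_reduce (u @ v) = foldr free_step u (free_reduce v)"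
  by (simp add: free_reduce_def)

lemma set_free_step: "fst ` set (free_step x acc) \<subseteq> insert (fst x) (fst ` set acc)"
  by (cases acc) (auto simp: free_step_Cons)

lemma set_foldr_free_step: "fst ` set (foldr free_step u acc) \<subseteq> fst ` set u \<union> fst ` set acc"
proof (induction u)
  case Nil then show ?case by simp
next
  case (Cons x u)
  have "fst ` set (foldr free_step (x # u) acc) \<subseteq> insert (fst x) (fst ` set (foldr free_step u acc))"
    using set_free_step by simp
  then show ?case using Cons.IH by auto
qed

lemma set_free_reduce: "fst ` set (free_reduce w) \<subseteq> fst ` set w"
  using set_foldr_free_step[of w "[]"] by (simp add: free_reduce_def)

lemma carrier_free_group: "carrier (free_group Xs) = {w. fst ` set w \<subseteq> Xs \<and> red w}"
  by (auto simp: free_group_def free_reduce_eq_iff)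

lemma mult_free_group: "x \<otimes>\<^bsub>free_group Xs\<^esub> y = free_reduce (x @ y)"
  by (simp add: free_group_def)

lemma one_free_group: "\<one>\<^bsub>free_group Xs\<^esub> = []"
  by (simp add: free_group_def)

lemma mult_free_group_red: "red y \<Longrightarrow> x \<otimes>\<^bsub>free_group Xs\<^esub> y = foldr free_step x y"
  by (simp add: mult_free_group free_reduce_append free_reduce_red)

lemma inv_foldr:
  assumes "red acc"
  shows "foldr free_step (rev (map flip w)) (foldr free_step w acc) = acc"
  using assms
proof (induction w arbitrary: acc)
  case Nil then show ?case by simp
next
  case (Cons x w)
  have "foldr free_step (rev (map flip (x # w))) (foldr free_step (x # w) acc)
      = foldr free_step (rev (map flip w)) (free_step (flip x) (free_step x (foldr free_step w acc)))"
    by simp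
  also have "free_step (flip x) (free_step x (foldr free_step w acc)) = foldr free_step w acc"
    using free_step_flip[OF red_foldr[OF Cons.prems], of "flip x" w] by simp
  finally show ?case using Cons by simp
qed

lemma group_free_group: "group (free_group Xs)"
proof (rule groupI)
  fix x y assume that: "x \<in> carrier (free_group Xs)" "y \<in> carrier (free_group Xs)"
  show "x \<otimes>\<^bsub>free_group Xs\<^esub> y \<in> carrier (free_group Xs)"
  proof -
    have "fst ` set (free_reduce (x @ y)) \<subseteq> Xs"
    proof -
      have "fst ` set (x @ y) \<subseteq> Xs" using that by (auto simp: carrier_free_group)
      then show ?thesis using set_free_reduce[of "x @ y"] by blast
    qed
    then show ?thesis using red_free_reduce by (simp add: carrier_free_group mult_free_group)
  qed
next
  show "\<one>\<^bsub>free_group Xs\<^esub> \<in> carrier (free_group Xs)"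
    by (simp add: carrier_free_group one_free_group)
next
  fix x y z assume xyz: "x \<in> carrier (free_group Xs)" "y \<in> carrier (free_group Xs)" "z \<in> carrier (free_group Xs)"
  then have rz: "red z" and ry: "red y" by (auto simp: carrier_free_group)
  have "(x \<otimes>\<^bsub>free_group Xs\<^esub> y) \<otimes>\<^bsub>free_group Xs\<^esub> z = foldr free_step (free_reduce (x @ y)) z"
    using mult_free_group_red[OF rz] by (simp add: mult_free_group)
  also have "\<dots> = foldr free_step x (foldr free_step y z)"
    using foldr_free_reduce[OF rz] by simp
  also have "\<dots> = x \<otimes>\<^bsub>free_group Xs\<^esub> (y \<otimes>\<^bsub>free_group Xs\<^esub> z)"
    using rz red_foldr[OF rz, of y] by (simp add: mult_free_group_red)
  finally show "(x \<otimes>\<^bsub>free_group Xs\<^esub> y) \<otimes>\<^bsub>free_group Xs\<^esub> z = x \<otimes>\<^bsub>free_group Xs\<^esub> (y \<otimes>\<^bsub>free_group Xs\<^esub> z)" .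
next
  fix x assume "x \<in> carrier (free_group Xs)"
  then show "\<one>\<^bsub>free_group Xs\<^esub> \<otimes>\<^bsub>free_group Xs\<^esub> x = x"
    by (simp add: carrier_free_group one_free_group mult_free_group free_reduce_red)
next
  fix x assume x: "x \<in> carrier (free_group Xs)"
  then have rx: "red x" by (simp add: carrier_free_group)
  let ?y = "free_reduce (rev (map flip x))"
  have yc: "?y \<in> carrier (free_group Xs)"
  proof -
    have "fst ` set (rev (map flip x)) = fst ` set x" by (force simp: flip_def)
    moreover have "fst ` set x \<subseteq> Xs" using x by (simp add: carrier_free_group)
    ultimately have "fst ` set ?y \<subseteq> Xs" using set_free_reduce[of "rev (map flip x)"]
      by (metis subset_trans)
    then show ?thesis using red_free_reduce by (simp add: carrier_free_group)
  qed
  have "?y \<otimes>\<^bsub>free_group Xs\<^esub> x = foldr free_step ?y x"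
    by (rule mult_free_group_red[OF rx])
  moreover have "foldr free_step ?y x = foldr free_step (rev (map flip x)) x"
    by (rule foldr_free_reduce[OF rx])
  moreover have "foldr free_step x [] = x"
    using free_reduce_red[OF rx] by (simp add: free_reduce_def)
  moreover have "foldr free_step (rev (map flip x)) (foldr free_step x []) = []"
    by (rule inv_foldr) simp
  ultimately have "?y \<otimes>\<^bsub>free_group Xs\<^esub> x = \<one>\<^bsub>free_group Xs\<^esub>"
    by (simp add: one_free_group)
  then show "\<exists>y\<in>carrier (free_group Xs). y \<otimes>\<^bsub>free_group Xs\<^esub> x = \<one>\<^bsub>free_group Xs\<^esub>" using yc by blast
qed


definition lv :: "('g, 'c) monoid_scheme \<Rightarrow> ('a \<Rightarrow> 'g) \<Rightarrow> 'a \<times> bool \<Rightarrow> 'g" where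
  "lv G f x = (if snd x then f (fst x) else inv\<^bsub>G\<^esub> (f (fst x)))"

lemma free_eval_Nil [simp]: "free_eval G f [] = \<one>\<^bsub>G\<^esub>"
  by (simp add: free_eval_def)

lemma free_eval_Cons: "free_eval G f (x # w) = lv G f x \<otimes>\<^bsub>G\<^esub> free_eval G f w"
  by (cases x) (simp add: free_eval_def lv_def)

context group
begin

lemma lv_carrier: "f ` Xs \<subseteq> carrier G \<Longrightarrow> fst x \<in> Xs \<Longrightarrow> lv G f x \<in> carrier G"
  by (auto simp: lv_def)

lemma free_eval_carrier:
  "f ` Xs \<subseteq> carrier G \<Longrightarrow> fst ` set w \<subseteq> Xs \<Longrightarrow> free_eval G f w \<in> carrier G"
  by (induction w) (auto simp: free_eval_Cons lv_carrier)

lemma free_eval_append: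
  assumes "f ` Xs \<subseteq> carrier G" "fst ` set u \<subseteq> Xs" "fst ` set v \<subseteq> Xs"
  shows "free_eval G f (u @ v) = free_eval G f u \<otimes> free_eval G f v"
  using assms
  by (induction u) (auto simp: free_eval_Cons lv_carrier free_eval_carrier m_assoc)

lemma lv_flip: "f ` Xs \<subseteq> carrier G \<Longrightarrow> fst x \<in> Xs \<Longrightarrow> lv G f x \<otimes> lv G f (flip x) = \<one>"
  by (auto simp: lv_def flip_def)

lemma free_eval_free_step:
  assumes f: "f ` Xs \<subseteq> carrier G" and x: "fst x \<in> Xs" and acc: "fst ` set acc \<subseteq> Xs"
  shows "free_eval G f (free_step x acc) = free_eval G f (x # acc)"
proof (cases acc)
  case Nil then show ?thesis by simp
next
  case (Cons y ys)
  show ?thesis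
  proof (cases "cancels y x")
    case True
    then have y: "y = flip x" by (simp add: cancels_iff_flip)
    have ys: "fst ` set ys \<subseteq> Xs" using acc Cons by auto
    have "free_eval G f (x # acc) = (lv G f x \<otimes> lv G f (flip x)) \<otimes> free_eval G f ys"
      using Cons y f x ys by (simp add: free_eval_Cons m_assoc lv_carrier free_eval_carrier flip_def)
    also have "\<dots> = free_eval G f ys" using lv_flip[OF f x] free_eval_carrier[OF f ys] by simp
    finally show ?thesis using Cons True by (simp add: free_step_Cons)
  next
    case False
    then show ?thesis using Cons by (simp add: free_step_Cons)
  qed
qed

lemma free_eval_foldr:
  assumes f: "f ` Xs \<subseteq> carrier G" and u: "fst ` set u \<subseteq> Xs" and acc: "fst ` set acc \<subseteq> Xs"
  shows "free_eval G f (foldr free_step u acc) = free_eval G f (u @ acc)"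
  using u
proof (induction u)
  case Nil then show ?case by simp
next
  case (Cons x u)
  have u': "fst ` set u \<subseteq> Xs" using Cons.prems by auto
  have s: "fst ` set (foldr free_step u acc) \<subseteq> Xs"
    using set_foldr_free_step[of u acc] u' acc by blast
  have "free_eval G f (foldr free_step (x # u) acc) = free_eval G f (x # foldr free_step u acc)"
    using free_eval_free_step[OF f _ s, of x] Cons.prems by simp
  also have "\<dots> = free_eval G f (x # u @ acc)"
    using Cons by (simp add: free_eval_Cons)
  finally show ?case by simp
qed

lemma free_eval_free_reduce:
  assumes f: "f ` Xs \<subseteq> carrier G" and w: "fst ` set w \<subseteq> Xs"
  shows "free_eval G f (free_reduce w) = free_eval G f w"
  using free_eval_foldr[OF f w, of "[]"] by (simp add: free_reduce_def)

lemma free_eval_hom: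
  assumes f: "f ` Xs \<subseteq> carrier G"
  shows "free_eval G f \<in> hom (free_group Xs) G"
proof (rule homI)
  fix x assume "x \<in> carrier (free_group Xs)"
  then show "free_eval G f x \<in> carrier G" using free_eval_carrier[OF f] by (simp add: carrier_free_group)
next
  fix x y assume xy: "x \<in> carrier (free_group Xs)" "y \<in> carrier (free_group Xs)"
  then have "fst ` set (x @ y) \<subseteq> Xs" by (auto simp: carrier_free_group)
  then show "free_eval G f (x \<otimes>\<^bsub>free_group Xs\<^esub> y) = free_eval G f x \<otimes> free_eval G f y"
    using xy free_eval_free_reduce[OF f] free_eval_append[OF f]
    by (simp add: mult_free_group carrier_free_group)
qed

lemma hom_free_eval:
  assumes h: "h \<in> hom G K" and K: "group K" and f: "f ` Xs \<subseteq> carrier G" and w: "fst ` set w \<subseteq> Xs"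
  shows "h (free_eval G f w) = free_eval K (h \<circ> f) w"
  using w
proof (induction w)
  case Nil then show ?case using h K by (simp add: hom_one group.is_monoid group_axioms)
next
  case (Cons x w)
  have gh: "group_hom G K h" using h K by (simp add: group_hom_def group_hom_axioms_def group_axioms)
  have x: "fst x \<in> Xs" and w: "fst ` set w \<subseteq> Xs" using Cons.prems by auto
  have "h (free_eval G f (x # w)) = h (lv G f x) \<otimes>\<^bsub>K\<^esub> h (free_eval G f w)"
    using h free_eval_carrier[OF f w] lv_carrier[OF f x] by (simp add: free_eval_Cons hom_mult)
  moreover have "h (lv G f x) = lv K (h \<circ> f) x"
    using group_hom.hom_inv[OF gh] f x by (auto simp: lv_def)
  ultimately show ?case using Cons.IH[OF w] by (simp add: free_eval_Cons comp_def)
qed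

end

lemma inv_free_group_single:
  assumes "fst x \<in> Xs"
  shows "inv\<^bsub>free_group Xs\<^esub> [x] = [flip x]"
proof -
  interpret F: group "free_group Xs" by (rule group_free_group)
  have c1: "[x] \<in> carrier (free_group Xs)" and c2: "[flip x] \<in> carrier (free_group Xs)"
    using assms by (auto simp: carrier_free_group flip_def)
  have "[flip x] \<otimes>\<^bsub>free_group Xs\<^esub> [x] = \<one>\<^bsub>free_group Xs\<^esub>"
    by (simp add: mult_free_group_red one_free_group free_step_Cons cancels_iff_flip)
  then show ?thesis using F.inv_equality[OF _ c1 c2] by simp
qed

lemma free_eval_gen:
  assumes "w \<in> carrier (free_group Xs)"
  shows "free_eval (free_group Xs) free_gen w = w"
  using assms
proof (induction w)
  case Nil then show ?case by (simp add: one_free_group)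
next
  case (Cons x w)
  have r: "red (x # w)" and x: "fst x \<in> Xs" and wc: "w \<in> carrier (free_group Xs)"
    using Cons.prems by (auto simp: carrier_free_group dest: red_tl)
  have "lv (free_group Xs) free_gen x = [x]"
  proof (cases x)
    case (Pair a b)
    then have "inv\<^bsub>free_group Xs\<^esub> [(a, True)] = [(a, False)]"
      using inv_free_group_single[of "(a, True)" Xs] x by (simp add: flip_def)
    then show ?thesis using Pair by (auto simp: lv_def free_gen_def)
  qed
  then show ?case using Cons.IH[OF wc] r
    by (simp add: free_eval_Cons mult_free_group_red[OF red_tl[OF r]] free_step_red_id)
qed


lemma (in group) normal_closure_normal:
  assumes R: "R \<subseteq> carrier G"
  shows "normal_closure G R \<lhd> G"
proof -
  let ?S = "\<Union>g\<in>carrier G. (\<lambda>r. g \<otimes> r \<otimes> inv g) ` R"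
  have S: "?S \<subseteq> carrier G" using R by auto
  have sub: "subgroup (generate G ?S) G" by (rule generate_is_subgroup[OF S])
  have conj: "x \<otimes> h \<otimes> inv x \<in> generate G ?S" if x: "x \<in> carrier G" and h: "h \<in> generate G ?S" for x h
    using h
  proof (induction rule: generate.induct)
    case one then show ?case using x by (simp add: generate.one)
  next
    case (incl h)
    then obtain g r where g: "g \<in> carrier G" and r: "r \<in> R" and hh: "h = g \<otimes> r \<otimes> inv g" by auto
    have "x \<otimes> h \<otimes> inv x = (x \<otimes> g) \<otimes> r \<otimes> inv (x \<otimes> g)"
      using x g r R hh by (auto simp: m_assoc inv_mult_group)
    moreover have "(x \<otimes> g) \<otimes> r \<otimes> inv (x \<otimes> g) \<in> ?S" using x g r by blast
    ultimately show ?case by (simp add: generate.incl)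
  next
    case (inv h)
    then obtain g r where g: "g \<in> carrier G" and r: "r \<in> R" and hh: "h = g \<otimes> r \<otimes> inv g" by auto
    have hc: "h \<in> carrier G" using hh g r R by auto
    have "x \<otimes> inv h \<otimes> inv x = inv (x \<otimes> h \<otimes> inv x)"
      using x hc by (simp add: m_assoc inv_mult_group)
    moreover have "x \<otimes> h \<otimes> inv x = (x \<otimes> g) \<otimes> r \<otimes> inv (x \<otimes> g)"
      using x g r R hh by (auto simp: m_assoc inv_mult_group)
    moreover have "(x \<otimes> g) \<otimes> r \<otimes> inv (x \<otimes> g) \<in> ?S" using x g r by blast
    ultimately show ?case by (simp add: generate.inv)
  next
    case (eng h1 h2)
    have c1: "h1 \<in> carrier G" and c2: "h2 \<in> carrier G"
      using eng.hyps generate_in_carrier[OF S] by auto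
    have "x \<otimes> (h1 \<otimes> h2) \<otimes> inv x = (x \<otimes> h1 \<otimes> inv x) \<otimes> (x \<otimes> h2 \<otimes> inv x)"
    proof -
      have cancel: "inv x \<otimes> (x \<otimes> y) = y" if "y \<in> carrier G" for y
        using x that by (simp add: m_assoc[symmetric])
      have "(x \<otimes> h1 \<otimes> inv x) \<otimes> (x \<otimes> h2 \<otimes> inv x) = x \<otimes> (h1 \<otimes> (inv x \<otimes> (x \<otimes> (h2 \<otimes> inv x))))"
        using x c1 c2 by (simp only: m_assoc inv_closed m_closed)
      also have "\<dots> = x \<otimes> (h1 \<otimes> (h2 \<otimes> inv x))"
        using x c1 c2 cancel[of "h2 \<otimes> inv x"] by simp
      also have "\<dots> = x \<otimes> (h1 \<otimes> h2) \<otimes> inv x"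
        using x c1 c2 by (simp only: m_assoc inv_closed m_closed)
      finally show ?thesis by (rule sym)
    qed
    then show ?case using generate.eng[OF eng.IH(1) eng.IH(2)] by simp
  qed
  show ?thesis unfolding normal_closure_def
    using sub conj normal_inv_iff by blast
qed

lemma mult3_free_group:
  assumes "x \<in> carrier (free_group Xs)" "y \<in> carrier (free_group Xs)" "z \<in> carrier (free_group Xs)"
  shows "x \<otimes>\<^bsub>free_group Xs\<^esub> (y \<otimes>\<^bsub>free_group Xs\<^esub> z) = free_reduce (x @ y @ z)"
proof -
  have rz: "red z" using assms by (simp add: carrier_free_group)
  have "x \<otimes>\<^bsub>free_group Xs\<^esub> (y \<otimes>\<^bsub>free_group Xs\<^esub> z) = foldr free_step x (foldr free_step y z)"
    using rz red_foldr[OF rz, of y] by (simp add: mult_free_group_red)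
  also have "\<dots> = foldr free_step (x @ y @ z) []"
    using free_reduce_red[OF rz] by (simp add: free_reduce_def)
  finally show ?thesis by (simp add: free_reduce_def)
qed

lemma free_reduce_carrier:
  "fst ` set w \<subseteq> Xs \<Longrightarrow> free_reduce w \<in> carrier (free_group Xs)"
  using set_free_reduce[of w] red_free_reduce[of w] by (auto simp: carrier_free_group)

locale amal_setup =
  fixes A :: "('a, 'c) monoid_scheme" and B :: "('b, 'd) monoid_scheme"
    and phi :: "'i \<Rightarrow> 'a" and psi :: "'i \<Rightarrow> 'b" and I :: "'i set"
  assumes A: "group A" and B: "group B"
    and phi: "phi ` I \<subseteq> carrier A" and psi: "psi ` I \<subseteq> carrier B"
begin

abbreviation "FA \<equiv> amalg_free A B"
abbreviation "NN \<equiv> amalg_N A B phi psi I"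
abbreviation "AM \<equiv> amalgam A B phi psi I"

lemma group_FA: "group FA"
  unfolding amalg_free_def by (rule group_free_group)

lemma carrier_FA: "carrier FA = {w. fst ` set w \<subseteq> carrier A <+> carrier B \<and> red w}"
  unfolding amalg_free_def by (rule carrier_free_group)

lemma rels_carrier: "amalg_rels A B phi psi I \<subseteq> carrier FA"
proof -
  interpret A: group A by (rule A)
  interpret B: group B by (rule B)
  show ?thesis
    unfolding amalg_rels_def amalg_free_def using phi psi
    by (auto simp: image_subset_iff intro!: free_reduce_carrier)
qed

lemma normal_NN: "NN \<lhd> FA"
  unfolding amalg_N_def by (rule group.normal_closure_normal[OF group_FA rels_carrier])

lemma group_AM: "group AM"
  unfolding amalgam_def by (rule normal.factorgroup_is_group[OF normal_NN])

definition iota :: "'a + 'b \<Rightarrow> ('a + 'b) \<times> bool" where "iota c = (c, True)"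

lemma gen_carrier: "c \<in> carrier A <+> carrier B \<Longrightarrow> free_gen c \<in> carrier FA"
  by (simp add: carrier_FA free_gen_def)

lemma coset_carrier: "w \<in> carrier FA \<Longrightarrow> NN #>\<^bsub>FA\<^esub> w \<in> carrier AM"
  unfolding amalgam_def by (simp add: carrier_FactGroup)

lemma AM_mult: "w \<in> carrier FA \<Longrightarrow> v \<in> carrier FA \<Longrightarrow>
   (NN #>\<^bsub>FA\<^esub> w) \<otimes>\<^bsub>AM\<^esub> (NN #>\<^bsub>FA\<^esub> v) = NN #>\<^bsub>FA\<^esub> (w \<otimes>\<^bsub>FA\<^esub> v)"
  unfolding amalgam_def using normal.rcos_sum[OF normal_NN] by simp

lemma AM_one: "\<one>\<^bsub>AM\<^esub> = NN #>\<^bsub>FA\<^esub> \<one>\<^bsub>FA\<^esub>"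
proof -
  interpret FA: group FA by (rule group_FA)
  have "NN \<subseteq> carrier FA" using normal_NN normal_imp_subgroup subgroup.subset by blast
  then show ?thesis unfolding amalgam_def by simp
qed

lemma amalg_inl_hom: "amalg_inl A B phi psi I \<in> hom A AM"
proof -
  interpret A: group A by (rule A)
  interpret FA: group FA by (rule group_FA)
  interpret NN: normal NN FA by (rule normal_NN)
  have Nsub: "NN \<subseteq> carrier FA" using NN.subset by blast
  show ?thesis
  proof (rule homI)
    fix a assume "a \<in> carrier A"
    then show "amalg_inl A B phi psi I a \<in> carrier AM"
      unfolding amalg_inl_def by (intro coset_carrier gen_carrier) auto
  next
    fix a a' assume a: "a \<in> carrier A" and a': "a' \<in> carrier A"
    define u where "u = (free_gen (Inl a) :: (('a + 'b) \<times> bool) list)"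
    define v where "v = (free_gen (Inl a') :: (('a + 'b) \<times> bool) list)"
    define w where "w = (free_gen (Inl (a \<otimes>\<^bsub>A\<^esub> a')) :: (('a + 'b) \<times> bool) list)"
    have uc: "u \<in> carrier FA" and vc: "v \<in> carrier FA" and wc: "w \<in> carrier FA"
      using a a' unfolding u_def v_def w_def by (auto intro!: gen_carrier)
    have winv: "inv\<^bsub>FA\<^esub> w = [(Inl (a \<otimes>\<^bsub>A\<^esub> a'), False)]"
      unfolding w_def free_gen_def amalg_free_def
      using inv_free_group_single[of "(Inl (a \<otimes>\<^bsub>A\<^esub> a'), True)" "carrier A <+> carrier B"] a a'
      by (simp add: flip_def InlI)
    define r where "r = (free_reduce [(Inl a, True), (Inl a', True), (Inl (a \<otimes>\<^bsub>A\<^esub> a'), False)] :: (('a + 'b) \<times> bool) list)"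
    have rR: "r \<in> amalg_rels A B phi psi I" unfolding amalg_rels_def r_def using a a' by blast
    then have rc: "r \<in> carrier FA" using rels_carrier by blast
    have "\<one>\<^bsub>FA\<^esub> \<otimes>\<^bsub>FA\<^esub> r \<otimes>\<^bsub>FA\<^esub> inv\<^bsub>FA\<^esub> \<one>\<^bsub>FA\<^esub> = r" using rc by simp
    then have "r \<in> (\<Union>g\<in>carrier FA. (\<lambda>r. g \<otimes>\<^bsub>FA\<^esub> r \<otimes>\<^bsub>FA\<^esub> inv\<^bsub>FA\<^esub> g) ` amalg_rels A B phi psi I)"
      using rR FA.one_closed by (metis (no_types, lifting) UN_I image_eqI)
    then have rN: "r \<in> NN" unfolding amalg_N_def normal_closure_def by (rule generate.incl)
    have "r = u \<otimes>\<^bsub>FA\<^esub> (v \<otimes>\<^bsub>FA\<^esub> inv\<^bsub>FA\<^esub> w)"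
      unfolding amalg_free_def r_def
      apply (subst mult3_free_group)
      using uc vc wc winv unfolding amalg_free_def u_def v_def w_def free_gen_def
      by (auto simp: carrier_free_group a a')
    then have "r \<otimes>\<^bsub>FA\<^esub> w = u \<otimes>\<^bsub>FA\<^esub> v"
      using uc vc wc by (simp add: FA.m_assoc)
    then have "NN #>\<^bsub>FA\<^esub> (u \<otimes>\<^bsub>FA\<^esub> v) = (NN #>\<^bsub>FA\<^esub> r) #>\<^bsub>FA\<^esub> w"
      using FA.coset_mult_assoc[OF Nsub _ wc, of r] rN Nsub by auto
    also have "\<dots> = NN #>\<^bsub>FA\<^esub> w"
      using NN.rcos_const[OF group_FA rN] by simp
    finally show "amalg_inl A B phi psi I (a \<otimes>\<^bsub>A\<^esub> a') =
       amalg_inl A B phi psi I a \<otimes>\<^bsub>AM\<^esub> amalg_inl A B phi psi I a'"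
      unfolding amalg_inl_def using AM_mult[OF uc vc] u_def v_def w_def by simp
  qed
qed


definition lift :: "('k, 'e) monoid_scheme \<Rightarrow> ('a \<Rightarrow> 'k) \<Rightarrow> ('b \<Rightarrow> 'k) \<Rightarrow> (('a + 'b) \<times> bool) list \<Rightarrow> 'k"
  where "lift K al be = free_eval K (case_sum al be)"

definition desc :: "('k, 'e) monoid_scheme \<Rightarrow> ('a \<Rightarrow> 'k) \<Rightarrow> ('b \<Rightarrow> 'k) \<Rightarrow> (('a + 'b) \<times> bool) list set \<Rightarrow> 'k"
  where "desc K al be C = lift K al be (SOME c. c \<in> C)"

context
  fixes K :: "('k, 'e) monoid_scheme" and al :: "'a \<Rightarrow> 'k" and be :: "'b \<Rightarrow> 'k"
  assumes K: "group K" and al: "al \<in> hom A K" and be: "be \<in> hom B K"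
    and compat: "\<And>i. i \<in> I \<Longrightarrow> al (phi i) = be (psi i)"
begin

lemma case_sum_carrier: "case_sum al be ` (carrier A <+> carrier B) \<subseteq> carrier K"
  using al be by (auto simp: hom_def)

lemma lift_hom: "lift K al be \<in> hom FA K"
  unfolding lift_def amalg_free_def by (rule group.free_eval_hom[OF K case_sum_carrier])

lemma lift_rels: "r \<in> amalg_rels A B phi psi I \<Longrightarrow> lift K al be r = \<one>\<^bsub>K\<^esub>"
proof -
  interpret K: group K by (rule K)
  interpret A: group A by (rule A)
  interpret B: group B by (rule B)
  interpret al: group_hom A K al using al by (simp add: group_hom_def group_hom_axioms_def A.group_axioms K.group_axioms)
  interpret be: group_hom B K be using be by (simp add: group_hom_def group_hom_axioms_def B.group_axioms K.group_axioms)
  assume "r \<in> amalg_rels A B phi psi I"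
  then consider (a) a a' where "a \<in> carrier A" "a' \<in> carrier A"
      "r = free_reduce [(Inl a, True), (Inl a', True), (Inl (a \<otimes>\<^bsub>A\<^esub> a'), False)]"
    | (b) b b' where "b \<in> carrier B" "b' \<in> carrier B"
      "r = free_reduce [(Inr b, True), (Inr b', True), (Inr (b \<otimes>\<^bsub>B\<^esub> b'), False)]"
    | (c) i where "i \<in> I" "r = free_reduce [(Inl (phi i), True), (Inr (psi i), False)]"
    unfolding amalg_rels_def by blast
  then show ?thesis
  proof cases
    case a
    let ?L = "[(Inl a, True), (Inl a', True), (Inl (a \<otimes>\<^bsub>A\<^esub> a'), False)] :: (('a + 'b) \<times> bool) list"
    have L: "fst ` set ?L \<subseteq> carrier A <+> carrier B" using a by auto
    have "lift K al be r = lift K al be ?L"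
      unfolding lift_def using a(3) K.free_eval_free_reduce[OF case_sum_carrier L] by simp
    also have "\<dots> = al a \<otimes>\<^bsub>K\<^esub> (al a' \<otimes>\<^bsub>K\<^esub> inv\<^bsub>K\<^esub> (al a \<otimes>\<^bsub>K\<^esub> al a'))"
      using a by (simp add: lift_def free_eval_Cons lv_def)
    also have "\<dots> = \<one>\<^bsub>K\<^esub>"
      using a by (simp add: K.m_assoc[symmetric])
    finally show ?thesis .
  next
    case b
    let ?L = "[(Inr b, True), (Inr b', True), (Inr (b \<otimes>\<^bsub>B\<^esub> b'), False)] :: (('a + 'b) \<times> bool) list"
    have L: "fst ` set ?L \<subseteq> carrier A <+> carrier B" using b by auto
    have "lift K al be r = lift K al be ?L"
      unfolding lift_def using b(3) K.free_eval_free_reduce[OF case_sum_carrier L] by simp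
    also have "\<dots> = be b \<otimes>\<^bsub>K\<^esub> (be b' \<otimes>\<^bsub>K\<^esub> inv\<^bsub>K\<^esub> (be b \<otimes>\<^bsub>K\<^esub> be b'))"
      using b by (simp add: lift_def free_eval_Cons lv_def)
    also have "\<dots> = \<one>\<^bsub>K\<^esub>"
      using b by (simp add: K.m_assoc[symmetric])
    finally show ?thesis .
  next
    case c
    then have pc: "phi i \<in> carrier A" "psi i \<in> carrier B" using phi psi by auto
    let ?L = "[(Inl (phi i), True), (Inr (psi i), False)] :: (('a + 'b) \<times> bool) list"
    have L: "fst ` set ?L \<subseteq> carrier A <+> carrier B" using pc by auto
    have "lift K al be r = lift K al be ?L"
      unfolding lift_def using c(2) K.free_eval_free_reduce[OF case_sum_carrier L] by simp
    also have "\<dots> = al (phi i) \<otimes>\<^bsub>K\<^esub> inv\<^bsub>K\<^esub> (be (psi i))"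
      using pc by (simp add: lift_def free_eval_Cons lv_def)
    also have "\<dots> = \<one>\<^bsub>K\<^esub>"
      using pc compat[OF c(1)] by simp
    finally show ?thesis .
  qed
qed

lemma group_hom_lift: "group_hom FA K (lift K al be)"
  using lift_hom K group_FA by (simp add: group_hom_def group_hom_axioms_def)

lemma lift_NN: "NN \<subseteq> kernel FA K (lift K al be)"
proof -
  interpret K: group K by (rule K)
  interpret FA: group FA by (rule group_FA)
  interpret h: group_hom FA K "lift K al be" by (rule group_hom_lift)
  have "(\<Union>g\<in>carrier FA. (\<lambda>r. g \<otimes>\<^bsub>FA\<^esub> r \<otimes>\<^bsub>FA\<^esub> inv\<^bsub>FA\<^esub> g) ` amalg_rels A B phi psi I)
      \<subseteq> kernel FA K (lift K al be)"
  proof (clarify)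
    fix g r assume g: "g \<in> carrier FA" and r: "r \<in> amalg_rels A B phi psi I"
    have rc: "r \<in> carrier FA" using r rels_carrier by blast
    show "g \<otimes>\<^bsub>FA\<^esub> r \<otimes>\<^bsub>FA\<^esub> inv\<^bsub>FA\<^esub> g \<in> kernel FA K (lift K al be)"
      unfolding kernel_def using g rc lift_rels[OF r] by simp
  qed
  then show ?thesis unfolding amalg_N_def normal_closure_def
    by (rule FA.generate_subgroup_incl[OF _ h.subgroup_kernel])
qed

lemma desc_coset:
  assumes w: "w \<in> carrier FA"
  shows "desc K al be (NN #>\<^bsub>FA\<^esub> w) = lift K al be w"
proof -
  interpret K: group K by (rule K)
  interpret FA: group FA by (rule group_FA)
  interpret h: group_hom FA K "lift K al be" by (rule group_hom_lift)
  have sub: "subgroup NN FA" using normal_NN normal_imp_subgroup by blast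
  have ex: "\<exists>c. c \<in> NN #>\<^bsub>FA\<^esub> w" using FA.rcos_self[OF w sub] by blast
  have "lift K al be c = lift K al be w" if c: "c \<in> NN #>\<^bsub>FA\<^esub> w" for c
  proof -
    obtain n where n: "n \<in> NN" and cn: "c = n \<otimes>\<^bsub>FA\<^esub> w" using c unfolding r_coset_def by blast
    have nc: "n \<in> carrier FA" using n sub subgroup.subset by blast
    have "lift K al be n = \<one>\<^bsub>K\<^esub>" using n lift_NN unfolding kernel_def by blast
    then show ?thesis using cn nc w by simp
  qed
  then show ?thesis unfolding desc_def using someI_ex[OF ex] by blast
qed

lemma desc_hom: "desc K al be \<in> hom AM K"
proof -
  interpret K: group K by (rule K)
  interpret FA: group FA by (rule group_FA)
  interpret h: group_hom FA K "lift K al be" by (rule group_hom_lift)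
  have car: "carrier AM = (\<lambda>w. NN #>\<^bsub>FA\<^esub> w) ` carrier FA"
    unfolding amalgam_def by (simp add: carrier_FactGroup)
  show ?thesis
  proof (rule homI)
    fix C assume "C \<in> carrier AM"
    then obtain w where w: "w \<in> carrier FA" and C: "C = NN #>\<^bsub>FA\<^esub> w"
      unfolding car by (rule imageE)
    have "desc K al be C = lift K al be w" unfolding C by (rule desc_coset[OF w])
    then show "desc K al be C \<in> carrier K" using h.hom_closed[OF w] by simp
  next
    fix C C' assume CC: "C \<in> carrier AM" "C' \<in> carrier AM"
    obtain w where w: "w \<in> carrier FA" and C: "C = NN #>\<^bsub>FA\<^esub> w"
      using CC(1) unfolding car by (rule imageE)
    obtain w' where w': "w' \<in> carrier FA" and C': "C' = NN #>\<^bsub>FA\<^esub> w'"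
      using CC(2) unfolding car by (rule imageE)
    have ww: "w \<otimes>\<^bsub>FA\<^esub> w' \<in> carrier FA" using w w' by simp
    have "desc K al be (C \<otimes>\<^bsub>AM\<^esub> C') = lift K al be (w \<otimes>\<^bsub>FA\<^esub> w')"
      unfolding C C' AM_mult[OF w w'] by (rule desc_coset[OF ww])
    also have "\<dots> = lift K al be w \<otimes>\<^bsub>K\<^esub> lift K al be w'" using w w' by simp
    also have "\<dots> = desc K al be C \<otimes>\<^bsub>K\<^esub> desc K al be C'"
      unfolding C C' using desc_coset[OF w] desc_coset[OF w'] by simp
    finally show "desc K al be (C \<otimes>\<^bsub>AM\<^esub> C') = desc K al be C \<otimes>\<^bsub>K\<^esub> desc K al be C'" .
  qed
qed

lemma desc_inl: "a \<in> carrier A \<Longrightarrow> desc K al be (amalg_inl A B phi psi I a) = al a"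
proof -
  interpret K: group K by (rule K)
  assume a: "a \<in> carrier A"
  have "al a \<in> carrier K" using a al by (auto simp: hom_def)
  then show ?thesis unfolding amalg_inl_def
    using desc_coset[OF gen_carrier[of "Inl a"]] a
    by (simp add: lift_def free_gen_def free_eval_Cons lv_def InlI InrI)
qed

lemma desc_inr: "b \<in> carrier B \<Longrightarrow> desc K al be (amalg_inr A B phi psi I b) = be b"
proof -
  interpret K: group K by (rule K)
  assume b: "b \<in> carrier B"
  have "be b \<in> carrier K" using b be by (auto simp: hom_def)
  then show ?thesis unfolding amalg_inr_def
    using desc_coset[OF gen_carrier[of "Inr b"]] b
    by (simp add: lift_def free_gen_def free_eval_Cons lv_def InlI InrI)
qed

end
end


abbreviation Fp :: "nat \<Rightarrow> fw monoid" where "Fp p \<equiv> free_group {..<p}"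

lemma group_Pxyz: "group (Pxyz p)"
  unfolding Pxyz_def by (intro DirProd_group group_free_group)

lemma gen_in_Fp: "i < p \<Longrightarrow> free_gen i \<in> carrier (Fp p)"
  by (simp add: carrier_free_group free_gen_def)

lemma xP_carrier: "i < p \<Longrightarrow> xP i \<in> carrier (Pxyz p)"
  and yP_carrier: "i < p \<Longrightarrow> yP i \<in> carrier (Pxyz p)"
  and zP_carrier: "i < p \<Longrightarrow> zP i \<in> carrier (Pxyz p)"
  by (auto simp: Pxyz_def xP_def yP_def zP_def carrier_free_group free_gen_def)

lemma psi_carrier: "i < p \<Longrightarrow> xP i \<otimes>\<^bsub>Pxyz p\<^esub> inv\<^bsub>Pxyz p\<^esub> yP i \<in> carrier (Pxyz p)"
proof -
  assume i: "i < p"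
  interpret P: group "Pxyz p" by (rule group_Pxyz)
  show ?thesis using i xP_carrier yP_carrier by simp
qed

lemma psi_third: "i < p \<Longrightarrow> snd (snd (xP i \<otimes>\<^bsub>Pxyz p\<^esub> inv\<^bsub>Pxyz p\<^esub> yP i)) = []"
proof -
  assume i: "i < p"
  interpret F: group "Fp p" by (rule group_free_group)
  have g: "group (Fp p)" by (rule group_free_group)
  have one: "[] \<in> carrier (Fp p)" by (simp add: carrier_free_group)
  have "inv\<^bsub>Pxyz p\<^esub> yP i = (inv\<^bsub>Fp p\<^esub> [], inv\<^bsub>Fp p \<times>\<times> Fp p\<^esub> (free_gen i, []))"
    unfolding Pxyz_def yP_def using i g one
    by (simp add: DirProd_group gen_in_Fp)
  also have "\<dots> = (inv\<^bsub>Fp p\<^esub> [], inv\<^bsub>Fp p\<^esub> (free_gen i), inv\<^bsub>Fp p\<^esub> [])"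
    using i g one by (simp add: gen_in_Fp)
  finally have "snd (snd (inv\<^bsub>Pxyz p\<^esub> yP i)) = []"
    using F.inv_one by (simp add: one_free_group)
  then show ?thesis
    using F.l_one[OF one]
    by (simp add: Pxyz_def xP_def mult_DirProd' one_free_group)
qed

lemma be_hom: "(\<lambda>q. snd (snd q)) \<in> hom (Pxyz p) (Fp p)"
  by (rule homI) (auto simp: Pxyz_def mult_DirProd')

lemma al_hom: "group H \<Longrightarrow> (\<lambda>_. []) \<in> hom H (Fp p)"
  by (rule homI) (auto simp: carrier_free_group mult_free_group free_reduce_def)


abbreviation psiP :: "nat \<Rightarrow> nat \<Rightarrow> fw \<times> fw \<times> fw" where
  "psiP p \<equiv> (\<lambda>i. xP i \<otimes>\<^bsub>Pxyz p\<^esub> inv\<^bsub>Pxyz p\<^esub> yP i)"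

locale setting =
  fixes H :: "('h, 'c) monoid_scheme" and T :: "'h set" and p :: nat and d :: "nat \<Rightarrow> 'h"
  assumes fp: "finitely_presented_by H T" and dT: "d ` {..<p} \<subseteq> T"
    and fb: "free_basis H d {..<p}"
begin

lemma group_H: "group H" using fp by (simp add: finitely_presented_by_def)
lemma T_carrier: "T \<subseteq> carrier H" using fp by (simp add: finitely_presented_by_def)
lemma gen_T: "generate H T = carrier H" using fp by (simp add: finitely_presented_by_def)
lemma d_carrier: "d ` {..<p} \<subseteq> carrier H" using dT T_carrier by blast

sublocale am: amal_setup H "Pxyz p" d "psiP p" "{..<p}"
  by (rule amal_setup.intro[OF group_H group_Pxyz d_carrier]) (auto simp: psi_carrier)

lemma Amal1_eq: "Amal1 H p d = am.AM" by (simp add: Amal1_def)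

abbreviation "GG \<equiv> G1 H p d"

lemma G1_eq: "GG = am.AM \<times>\<times> integer_group" by (simp add: G1_def Amal1_def)

lemma group_G1: "group GG"
  unfolding G1_eq by (intro DirProd_group am.group_AM group_integer_group)


definition Th :: "(('h + fw \<times> fw \<times> fw) \<times> bool) list set \<times> int \<Rightarrow> fw" where
  "Th g = am.desc (Fp p) (\<lambda>_. []) (\<lambda>q. snd (snd q)) (fst g)"

lemma compat: "i \<in> {..<p} \<Longrightarrow> (\<lambda>_. []) (d i) = snd (snd (psiP p i))"
  using psi_third by simp

lemmas desc_facts = am.desc_hom[OF group_free_group al_hom[OF group_H] be_hom compat]
  am.desc_inl[OF group_free_group al_hom[OF group_H] be_hom compat]
  am.desc_inr[OF group_free_group al_hom[OF group_H] be_hom compat]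

lemma Th_hom: "Th \<in> hom GG (Fp p)"
proof (rule homI)
  fix g assume "g \<in> carrier GG"
  then have "fst g \<in> carrier am.AM" by (auto simp: G1_eq)
  then show "Th g \<in> carrier (Fp p)" unfolding Th_def using desc_facts(1) by (auto simp: hom_def)
next
  fix g g' assume "g \<in> carrier GG" "g' \<in> carrier GG"
  then have "fst g \<in> carrier am.AM" "fst g' \<in> carrier am.AM" by (auto simp: G1_eq)
  then show "Th (g \<otimes>\<^bsub>GG\<^esub> g') = Th g \<otimes>\<^bsub>Fp p\<^esub> Th g'"
    unfolding Th_def G1_eq using desc_facts(1) by (simp add: mult_DirProd' hom_mult)
qed

lemma group_hom_Th: "group_hom GG (Fp p) Th"
  using Th_hom group_G1 group_free_group by (simp add: group_hom_def group_hom_axioms_def)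

lemma embH_hom: "embH H p d \<in> hom H GG"
proof (rule homI)
  fix h assume "h \<in> carrier H"
  then show "embH H p d h \<in> carrier GG"
    using am.amalg_inl_hom unfolding embH_def G1_eq by (auto simp: hom_def)
next
  fix h h' assume "h \<in> carrier H" "h' \<in> carrier H"
  then show "embH H p d (h \<otimes>\<^bsub>H\<^esub> h') = embH H p d h \<otimes>\<^bsub>GG\<^esub> embH H p d h'"
    using am.amalg_inl_hom unfolding embH_def G1_eq by (simp add: hom_mult integer_group_def)
qed

lemma embP_carrier: "q \<in> carrier (Pxyz p) \<Longrightarrow> embP H p d q \<in> carrier GG"
  unfolding embP_def G1_eq amalg_inr_def
  by (auto intro!: am.coset_carrier am.gen_carrier)

lemma Th_embH: "h \<in> carrier H \<Longrightarrow> Th (embH H p d h) = []"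
  unfolding Th_def embH_def using desc_facts(2) by simp

lemma Th_embP: "q \<in> carrier (Pxyz p) \<Longrightarrow> Th (embP H p d q) = snd (snd q)"
  unfolding Th_def embP_def using desc_facts(3) by simp

lemma gx_carrier: "i < p \<Longrightarrow> gx H p d i \<in> carrier GG"
  and gy_carrier: "i < p \<Longrightarrow> gy H p d i \<in> carrier GG"
  and gz_carrier: "i < p \<Longrightarrow> gz H p d i \<in> carrier GG"
  unfolding gx_def gy_def gz_def by (auto intro!: embP_carrier xP_carrier yP_carrier zP_carrier)

lemma Th_gx: "i < p \<Longrightarrow> Th (gx H p d i) = []"
  and Th_gy: "i < p \<Longrightarrow> Th (gy H p d i) = []"
  and Th_gz: "i < p \<Longrightarrow> Th (gz H p d i) = [(i, True)]"
  unfolding gx_def gy_def gz_def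
  by (auto simp: Th_embP xP_carrier yP_carrier zP_carrier) (simp_all add: xP_def yP_def zP_def free_gen_def)

lemma ga_carrier: "i < p \<Longrightarrow> ga H p d i \<in> carrier GG"
  and gb_carrier: "i < p \<Longrightarrow> gb H p d i \<in> carrier GG"
  unfolding ga_def gb_def using group_G1 gx_carrier gy_carrier gz_carrier
  by (auto intro: monoid.m_closed group.is_monoid)

lemma Th_ga: "i < p \<Longrightarrow> Th (ga H p d i) = [(i, True)]"
  and Th_gb: "i < p \<Longrightarrow> Th (gb H p d i) = [(i, True)]"
  unfolding ga_def gb_def
  using hom_mult[OF Th_hom] gx_carrier gy_carrier gz_carrier Th_gx Th_gy Th_gz
  by (simp_all add: mult_free_group free_reduce_def free_step_Cons)

lemma gs1_carrier: "gs1 H p d \<in> carrier GG"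
  unfolding gs1_def G1_eq Amal1_eq using group.is_monoid[OF am.group_AM]
  by (simp add: monoid.one_closed)

lemma Th_gs1: "Th (gs1 H p d) = []"
  unfolding Th_def gs1_def Amal1_eq
  using hom_one[OF desc_facts(1) am.group_AM group_free_group] by (simp add: one_free_group)

end


definition Words :: "('g, 'c) monoid_scheme \<Rightarrow> 'g set \<Rightarrow> 'g \<Rightarrow> nat \<Rightarrow> bool" where
  "Words G S g n \<longleftrightarrow> (\<exists>ws. length ws = n \<and> set ws \<subseteq> S \<union> m_inv G ` S \<and>
                                   foldr (\<otimes>\<^bsub>G\<^esub>) ws \<one>\<^bsub>G\<^esub> = g)"

lemma wl_le: "Words G S g n \<Longrightarrow> word_length G S g \<le> n"
  unfolding word_length_def Words_def by (rule Least_le)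

lemma wl_ex: "Words G S g n \<Longrightarrow> Words G S g (word_length G S g)"
  unfolding word_length_def Words_def by (rule LeastI)

lemma (in monoid) foldr_mult_append:
  "set xs \<subseteq> carrier G \<Longrightarrow> set ys \<subseteq> carrier G \<Longrightarrow>
   foldr (\<otimes>) (xs @ ys) \<one> = foldr (\<otimes>) xs \<one> \<otimes> foldr (\<otimes>) ys \<one>"
proof (induction xs)
  case Nil
  have "foldr (\<otimes>) ys \<one> \<in> carrier G" using Nil.prems(2) by (induction ys) auto
  then show ?case by simp
next
  case (Cons x xs)
  have "foldr (\<otimes>) xs \<one> \<in> carrier G" using Cons.prems(1) by (induction xs) auto
  moreover have "foldr (\<otimes>) ys \<one> \<in> carrier G" using Cons.prems(2) by (induction ys) auto
  ultimately show ?case using Cons by (simp add: m_assoc)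
qed

lemma (in monoid) foldr_mult_closed: "set xs \<subseteq> carrier G \<Longrightarrow> foldr (\<otimes>) xs \<one> \<in> carrier G"
  by (induction xs) auto

lemma (in group) generate_Words:
  assumes S: "S \<subseteq> carrier G" and g: "g \<in> generate G S"
  shows "\<exists>n. Words G S g n"
  using g
proof (induction rule: generate.induct)
  case one
  then show ?case unfolding Words_def by (rule exI[of _ 0]) simp
next
  case (incl h)
  then show ?case unfolding Words_def using S
    by (intro exI[of _ 1] exI[of _ "[h]"]) auto
next
  case (inv h)
  then show ?case unfolding Words_def using S
    by (intro exI[of _ 1] exI[of _ "[inv h]"]) auto
next
  case (eng h1 h2)
  then obtain ws1 ws2 where w1: "set ws1 \<subseteq> S \<union> m_inv G ` S" "foldr (\<otimes>) ws1 \<one> = h1"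
    and w2: "set ws2 \<subseteq> S \<union> m_inv G ` S" "foldr (\<otimes>) ws2 \<one> = h2"
    unfolding Words_def by blast
  have "S \<union> m_inv G ` S \<subseteq> carrier G" using S by auto
  then have "foldr (\<otimes>) (ws1 @ ws2) \<one> = h1 \<otimes> h2"
    using w1 w2 foldr_mult_append[of ws1 ws2] by auto
  then show ?case unfolding Words_def using w1 w2
    by (intro exI[of _ "length (ws1 @ ws2)"] exI[of _ "ws1 @ ws2"]) auto
qed

lemma len_mult_Fp:
  assumes u: "u \<in> carrier (free_group Xs)" and v: "v \<in> carrier (free_group Xs)" and l: "length u \<le> 1"
  shows "length (u \<otimes>\<^bsub>free_group Xs\<^esub> v) \<le> Suc (length v)"
proof -
  have rv: "red v" using v by (simp add: carrier_free_group)
  consider "u = []" | x where "u = [x]" using l by (cases u) auto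
  then show ?thesis
  proof cases
    case 1 then show ?thesis using mult_free_group_red[OF rv] by simp
  next
    case 2
    then have "u \<otimes>\<^bsub>free_group Xs\<^esub> v = free_step x v" using mult_free_group_red[OF rv] by simp
    then show ?thesis by (cases v) (auto simp: free_step_Cons)
  qed
qed

lemma free_eval_cong:
  "(\<And>x. x \<in> fst ` set w \<Longrightarrow> f x = g x) \<Longrightarrow> free_eval K f w = free_eval K g w"
  by (induction w) (auto simp: free_eval_Cons lv_def)

context setting
begin

lemma S1_carrier: "S1 H T p d \<subseteq> carrier GG"
  unfolding S1_def Rxz_def Ryz_def
  using embH_hom T_carrier gx_carrier gy_carrier gz_carrier ga_carrier gb_carrier gs1_carrier
  by (auto simp: hom_def)

lemma Th_S1: "s \<in> S1 H T p d \<Longrightarrow> Th s = [] \<or> (\<exists>i<p. Th s = [(i, True)])"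
  unfolding S1_def Rxz_def Ryz_def
  using T_carrier by (auto simp: Th_embH Th_gx Th_gy Th_gz Th_ga Th_gb Th_gs1)

lemma Th_gen_len:
  assumes s: "s \<in> S1 H T p d \<union> m_inv GG ` S1 H T p d"
  shows "length (Th s) \<le> 1"
proof -
  interpret Th: group_hom GG "Fp p" Th by (rule group_hom_Th)
  show ?thesis
  proof (cases "s \<in> S1 H T p d")
    case True then show ?thesis using Th_S1 by fastforce
  next
    case False
    then obtain t where t: "t \<in> S1 H T p d" and st: "s = inv\<^bsub>GG\<^esub> t" using s by blast
    have tc: "t \<in> carrier GG" using t S1_carrier by blast
    have "Th s = inv\<^bsub>Fp p\<^esub> (Th t)" using st tc by simp
    moreover have "inv\<^bsub>Fp p\<^esub> (Th t) = [] \<or> (\<exists>i<p. inv\<^bsub>Fp p\<^esub> (Th t) = [(i, False)])"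
      using Th_S1[OF t] inv_free_group_single[of "(_, True)" "{..<p}"]
      by (auto simp: flip_def one_free_group[symmetric, of "{..<p}"])
    ultimately show ?thesis by auto
  qed
qed

lemma Th_word:
  assumes "set ws \<subseteq> S1 H T p d \<union> m_inv GG ` S1 H T p d"
  shows "length (Th (foldr (\<otimes>\<^bsub>GG\<^esub>) ws \<one>\<^bsub>GG\<^esub>)) \<le> length ws"
  using assms
proof (induction ws)
  case Nil
  have "Th \<one>\<^bsub>GG\<^esub> = []" using group_hom.hom_one[OF group_hom_Th] by (simp add: one_free_group)
  then show ?case by simp
next
  case (Cons s ws)
  interpret G: group GG by (rule group_G1)
  interpret Th: group_hom GG "Fp p" Th by (rule group_hom_Th)
  have sets: "S1 H T p d \<union> m_inv GG ` S1 H T p d \<subseteq> carrier GG" using S1_carrier by auto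
  have s: "s \<in> carrier GG" and wsc: "set ws \<subseteq> carrier GG" using Cons.prems sets by auto
  have fc: "foldr (\<otimes>\<^bsub>GG\<^esub>) ws \<one>\<^bsub>GG\<^esub> \<in> carrier GG" using G.foldr_mult_closed[OF wsc] .
  have "Th (foldr (\<otimes>\<^bsub>GG\<^esub>) (s # ws) \<one>\<^bsub>GG\<^esub>) = Th s \<otimes>\<^bsub>Fp p\<^esub> Th (foldr (\<otimes>\<^bsub>GG\<^esub>) ws \<one>\<^bsub>GG\<^esub>)"
    using s fc by simp
  moreover have "length (Th s \<otimes>\<^bsub>Fp p\<^esub> Th (foldr (\<otimes>\<^bsub>GG\<^esub>) ws \<one>\<^bsub>GG\<^esub>))
      \<le> Suc (length (Th (foldr (\<otimes>\<^bsub>GG\<^esub>) ws \<one>\<^bsub>GG\<^esub>)))"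
    using len_mult_Fp[OF Th.hom_closed[OF s] Th.hom_closed[OF fc] Th_gen_len] Cons.prems by simp
  ultimately show ?case using Cons by simp
qed

lemma wl_lower: "Words GG (S1 H T p d) g n \<Longrightarrow> length (Th g) \<le> word_length GG (S1 H T p d) g"
  using wl_ex[of GG "S1 H T p d" g n] Th_word unfolding Words_def by metis

end


context setting
begin

context
  fixes gen :: "nat \<Rightarrow> (('h + fw \<times> fw \<times> fw) \<times> bool) list set \<times> int"
  assumes gen_c: "\<And>i. i < p \<Longrightarrow> gen i \<in> carrier GG"
    and gen_Th: "\<And>i. i < p \<Longrightarrow> Th (gen i) = [(i, True)]"
    and gen_S1: "\<And>i. i < p \<Longrightarrow> gen i \<in> S1 H T p d"
begin

abbreviation "RR \<equiv> gen ` {..<p}"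
abbreviation "FG \<equiv> generate GG RR"
abbreviation "SG \<equiv> GG\<lparr>carrier := FG\<rparr>"

lemma RR_carrier: "RR \<subseteq> carrier GG" using gen_c by auto

lemma gen_im: "gen ` {..<p} \<subseteq> carrier GG" using gen_c by auto

lemma subgroup_FG: "subgroup FG GG"
  using group.generate_is_subgroup[OF group_G1 RR_carrier] .

lemma gen_word: "k \<in> FG \<Longrightarrow> \<exists>w. fst ` set w \<subseteq> {..<p} \<and> free_eval GG gen w = k"
proof (induction rule: generate.induct)
  case one
  then show ?case by (intro exI[of _ "[]"]) simp
next
  case (incl h)
  then obtain i where i: "i < p" and h: "h = gen i" by auto
  show ?case using i h gen_c[OF i] group_G1
    by (intro exI[of _ "[(i, True)]"]) (simp add: free_eval_Cons lv_def group.is_monoid monoid.r_one)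
next
  case (inv h)
  then obtain i where i: "i < p" and h: "h = gen i" by auto
  show ?case using i h gen_c[OF i] group_G1
    by (intro exI[of _ "[(i, False)]"]) (simp add: free_eval_Cons lv_def group.is_monoid monoid.r_one group.inv_closed)
next
  case (eng h1 h2)
  then obtain w1 w2 where "fst ` set w1 \<subseteq> {..<p}" "free_eval GG gen w1 = h1"
    "fst ` set w2 \<subseteq> {..<p}" "free_eval GG gen w2 = h2" by blast
  then show ?case using group.free_eval_append[OF group_G1 gen_im]
    by (intro exI[of _ "w1 @ w2"]) auto
qed

lemma red_word: "k \<in> FG \<Longrightarrow> \<exists>w \<in> carrier (Fp p). free_eval GG gen w = k"
proof -
  assume "k \<in> FG"
  then obtain w where w: "fst ` set w \<subseteq> {..<p}" "free_eval GG gen w = k" using gen_word by blast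
  then show ?thesis
    using free_reduce_carrier[OF w(1)] group.free_eval_free_reduce[OF group_G1 gen_im w(1)] by blast
qed

lemma Th_eval: "w \<in> carrier (Fp p) \<Longrightarrow> Th (free_eval GG gen w) = w"
proof -
  assume w: "w \<in> carrier (Fp p)"
  then have ws: "fst ` set w \<subseteq> {..<p}" by (simp add: carrier_free_group)
  have "Th (free_eval GG gen w) = free_eval (Fp p) (Th \<circ> gen) w"
    using group.hom_free_eval[OF group_G1 Th_hom group_free_group gen_im ws] .
  also have "\<dots> = free_eval (Fp p) free_gen w"
    using ws gen_Th by (intro free_eval_cong) (auto simp: free_gen_def)
  also have "\<dots> = w" using free_eval_gen[OF w] .
  finally show ?thesis .
qed

lemma inv_SG: "x \<in> FG \<Longrightarrow> m_inv SG x = m_inv GG x"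
  using group.m_inv_consistent[OF group_G1 subgroup_FG] by simp

lemma foldr_eval: "foldr (\<otimes>\<^bsub>GG\<^esub>) (map (lv GG gen) w) \<one>\<^bsub>GG\<^esub> = free_eval GG gen w"
  by (induction w) (auto simp: free_eval_Cons)

lemma Words_SG: "w \<in> carrier (Fp p) \<Longrightarrow> Words SG RR (free_eval GG gen w) (length w)"
proof -
  assume w: "w \<in> carrier (Fp p)"
  then have ws: "fst ` set w \<subseteq> {..<p}" by (simp add: carrier_free_group)
  have "set (map (lv GG gen) w) \<subseteq> RR \<union> m_inv SG ` RR"
  proof
    fix s assume "s \<in> set (map (lv GG gen) w)"
    then obtain x where x: "x \<in> set w" and s: "s = lv GG gen x" by auto
    have i: "fst x < p" using x ws by auto
    have "gen (fst x) \<in> FG" using i by (auto intro: generate.incl)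
    have gi: "gen (fst x) \<in> RR" using i by simp
    show "s \<in> RR \<union> m_inv SG ` RR"
    proof (cases "snd x")
      case True
      then have "s = gen (fst x)" using s by (simp add: lv_def)
      then show ?thesis using gi by simp
    next
      case False
      then have "s = m_inv SG (gen (fst x))" using s inv_SG[OF \<open>gen (fst x) \<in> FG\<close>] by (simp add: lv_def)
      then show ?thesis using gi by blast
    qed
  qed
  then show ?thesis unfolding Words_def
    using foldr_eval[of w] by (intro exI[of _ "map (lv GG gen) w"]) simp
qed

lemma Words_up: "Words SG RR k n \<Longrightarrow> Words GG (S1 H T p d) k n"
proof -
  assume "Words SG RR k n"
  then obtain ws where ws: "length ws = n" "set ws \<subseteq> RR \<union> m_inv SG ` RR" "foldr (\<otimes>\<^bsub>SG\<^esub>) ws \<one>\<^bsub>SG\<^esub> = k"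
    unfolding Words_def by blast
  have "m_inv SG ` RR = m_inv GG ` RR"
  proof (rule image_cong[OF refl])
    fix x assume "x \<in> RR"
    then have "x \<in> FG" by (rule generate.incl)
    then show "m_inv SG x = m_inv GG x" by (rule inv_SG)
  qed
  moreover have R: "RR \<subseteq> S1 H T p d" using gen_S1 by auto
  ultimately have "RR \<union> m_inv SG ` RR \<subseteq> S1 H T p d \<union> m_inv GG ` S1 H T p d"
    by (metis Un_mono image_mono)
  then have s: "set ws \<subseteq> S1 H T p d \<union> m_inv GG ` S1 H T p d" using ws(2) by (rule subset_trans[rotated])
  have f: "foldr (\<otimes>\<^bsub>GG\<^esub>) ws \<one>\<^bsub>GG\<^esub> = k" using ws(3) by simp
  show ?thesis unfolding Words_def using ws(1) s f by blast
qed

lemma wl_FG: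
  assumes k: "k \<in> FG"
  shows "word_length GG (S1 H T p d) k = word_length SG RR k"
    and "word_length SG RR k = length (Th k)"
proof -
  obtain w where w: "w \<in> carrier (Fp p)" and kw: "free_eval GG gen w = k" using red_word[OF k] by blast
  have W: "Words SG RR k (length w)" using Words_SG[OF w] kw by simp
  have Thk: "length (Th k) = length w" using Th_eval[OF w] kw by simp
  have a: "word_length SG RR k \<le> length (Th k)" using wl_le[OF W] Thk by simp
  have W2: "Words SG RR k (word_length SG RR k)" using wl_ex[OF W] .
  have b: "word_length GG (S1 H T p d) k \<le> word_length SG RR k" using wl_le[OF Words_up[OF W2]] .
  have c: "length (Th k) \<le> word_length GG (S1 H T p d) k" using wl_lower[OF Words_up[OF W2]] .
  show "word_length GG (S1 H T p d) k = word_length SG RR k" using a b c by simp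
  show "word_length SG RR k = length (Th k)" using a b c by simp
qed

lemma claim_dist:
  assumes g: "g \<in> FG" and g': "g' \<in> FG"
  shows "cayley_dist GG (S1 H T p d) g g' = cayley_dist SG RR g g'"
proof -
  interpret G: group GG by (rule group_G1)
  have k: "inv\<^bsub>GG\<^esub> g \<otimes>\<^bsub>GG\<^esub> g' \<in> FG"
    using subgroup_FG g g' by (simp add: subgroup.m_closed subgroup.m_inv_closed)
  have "cayley_dist SG RR g g' = word_length SG RR (inv\<^bsub>GG\<^esub> g \<otimes>\<^bsub>GG\<^esub> g')"
    unfolding cayley_dist_def using inv_SG[OF g] by simp
  then show ?thesis unfolding cayley_dist_def using wl_FG(1)[OF k] by simp
qed

lemma claim_H:
  assumes g0: "g0 \<in> FG" and h: "h \<in> carrier H"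
  shows "word_length GG (S1 H T p d) (g0 \<otimes>\<^bsub>GG\<^esub> embH H p d h) \<ge> word_length GG (S1 H T p d) g0"
proof -
  interpret G: group GG by (rule group_G1)
  interpret E: group_hom H GG "embH H p d"
    using embH_hom group_H group_G1 by (simp add: group_hom_def group_hom_axioms_def)
  interpret Th: group_hom GG "Fp p" Th by (rule group_hom_Th)
  have g0c: "g0 \<in> carrier GG" using g0 subgroup_FG subgroup.subset by blast
  have hc: "embH H p d h \<in> carrier GG" using h by simp
  have "embH H p d h \<in> embH H p d ` generate H T" using h gen_T by simp
  also have "\<dots> = generate GG (embH H p d ` T)" using E.generate_img[OF T_carrier] by simp
  also have "\<dots> \<subseteq> generate GG (S1 H T p d)"
    by (rule G.mono_generate) (auto simp: S1_def)
  finally have e: "embH H p d h \<in> generate GG (S1 H T p d)" .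
  have "g0 \<in> generate GG (S1 H T p d)"
    using g0 G.mono_generate[of RR "S1 H T p d"] gen_S1 by auto
  then have "g0 \<otimes>\<^bsub>GG\<^esub> embH H p d h \<in> generate GG (S1 H T p d)"
    using e by (rule generate.eng)
  then obtain n where "Words GG (S1 H T p d) (g0 \<otimes>\<^bsub>GG\<^esub> embH H p d h) n"
    using G.generate_Words[OF S1_carrier] by blast
  then have "length (Th (g0 \<otimes>\<^bsub>GG\<^esub> embH H p d h)) \<le> word_length GG (S1 H T p d) (g0 \<otimes>\<^bsub>GG\<^esub> embH H p d h)"
    by (rule wl_lower)
  moreover have "Th (g0 \<otimes>\<^bsub>GG\<^esub> embH H p d h) = Th g0"
    using g0c hc Th_embH[OF h] Th.hom_closed[OF g0c]
    by (simp add: one_free_group[symmetric, of "{..<p}"])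
  moreover have "word_length GG (S1 H T p d) g0 = length (Th g0)"
    using wl_FG[OF g0] by simp
  ultimately show ?thesis by simp
qed

end

end


context setting
begin

lemma ga_S1: "i < p \<Longrightarrow> ga H p d i \<in> S1 H T p d"
  and gb_S1: "i < p \<Longrightarrow> gb H p d i \<in> S1 H T p d"
  by (auto simp: S1_def Rxz_def Ryz_def)

lemmas xz_dist = claim_dist[of "ga H p d", OF ga_carrier Th_ga ga_S1]
lemmas yz_dist = claim_dist[of "gb H p d", OF gb_carrier Th_gb gb_S1]
lemmas xz_H = claim_H[of "ga H p d", OF ga_carrier Th_ga ga_S1]
lemmas yz_H = claim_H[of "gb H p d", OF gb_carrier Th_gb gb_S1]

end

theorem lemma3p2:
  fixes H :: "('h, 'c) monoid_scheme" and T :: "'h set" and p :: nat and d :: "nat \<Rightarrow> 'h"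
  assumes "finitely_presented_by H T"
    and "d ` {..<p} \<subseteq> T"
    and "free_basis H d {..<p}"
  shows "(\<forall>g\<in>Fxz H p d. \<forall>g'\<in>Fxz H p d.
            cayley_dist (G1 H p d) (S1 H T p d) g g'
              = cayley_dist ((G1 H p d)\<lparr>carrier := Fxz H p d\<rparr>) (Rxz H p d) g g')
       \<and> (\<forall>g\<in>Fyz H p d. \<forall>g'\<in>Fyz H p d.
            cayley_dist (G1 H p d) (S1 H T p d) g g'
              = cayley_dist ((G1 H p d)\<lparr>carrier := Fyz H p d\<rparr>) (Ryz H p d) g g')
       \<and> (\<forall>g0\<in>Fxz H p d. \<forall>h\<in>carrier H.
            word_length (G1 H p d) (S1 H T p d) (g0 \<otimes>\<^bsub>G1 H p d\<^esub> embH H p d h)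
              \<ge> word_length (G1 H p d) (S1 H T p d) g0)
       \<and> (\<forall>g1\<in>Fyz H p d. \<forall>h\<in>carrier H.
            word_length (G1 H p d) (S1 H T p d) (g1 \<otimes>\<^bsub>G1 H p d\<^esub> embH H p d h)
              \<ge> word_length (G1 H p d) (S1 H T p d) g1)"
proof -
  interpret setting H T p d using assms by (rule setting.intro)
  show ?thesis
    unfolding Fxz_def Fyz_def Rxz_def Ryz_def
    using xz_dist yz_dist xz_H yz_H by blast
qed

end
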